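(* Let $C\subset\mathbb{R}^d$ be a convex body and $\mu$ a non-$C$-degenerate measure with $\mu(C)>0$ and $\mu(\mathbb{R}^d)=\infty$. Let $B\subset\mathbb{R}^d$ be a Euclidean ball with $\mu(B)\ge\mu(C)$, and let $C'$ be a homothet of $C$ such that $\mu(C'\cap B)<\mu(C)$ but $C'\not\subset B$. Then $C'\cap B$ can be covered by a finite collection of homothets of $C$, each of $\mu$-measure at most $\mu(C)$, none of which is fully contained in $B$.
   Context: A convex body is a convex compact set with nonempty interior; a homothet of $C$ is $\lambda C+x$ with $\lambda>0$, $x\in\mathbb{R}^d$. Measures are Borel measures on $\mathbb{R}^d$ finite on compact sets; $\mu$ is non-$C$-degenerate if it vanishes on the boundary of every homothet of $C$. *)

theory Defs
  imports "HOL-Analysis.Analysis"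
begin

definition convex_body :: "'a::euclidean_space set \<Rightarrow> bool" where
  "convex_body C \<longleftrightarrow> convex C \<and> compact C \<and> interior C \<noteq> {}"

definition homothet :: "'a::euclidean_space set \<Rightarrow> 'a set \<Rightarrow> bool" where
  "homothet C H \<longleftrightarrow> (\<exists>l::real. \<exists>x. l > 0 \<and> H = (\<lambda>y. l *\<^sub>R y + x) ` C)"

definition locally_finite_borel :: "'a::euclidean_space measure \<Rightarrow> bool" where
  "locally_finite_borel M \<longleftrightarrow> sets M = sets borel \<and>
     (\<forall>K. compact K \<longrightarrow> emeasure M K < \<infinity>)"

definition non_degenerate :: "'a::euclidean_space set \<Rightarrow> 'a measure \<Rightarrow> bool" where
  "non_degenerate C M \<longleftrightarrow> (\<forall>H. homothet C H \<longrightarrow> emeasure M (frontier H) = 0)"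

end

theory Submission
  imports Defs
begin

lemma aff_eq: "(\<lambda>y. s *\<^sub>R y + u) = (\<lambda>y. u + s *\<^sub>R y)" for u :: "'a::real_vector"
  by (rule ext) (simp add: add.commute)

lemma homothet_comp:
  assumes "homothet C H" "s > 0"
  shows "homothet C ((\<lambda>y. s *\<^sub>R y + u) ` H)"
proof -
  obtain l v where lv: "l > 0" "H = (\<lambda>y. l *\<^sub>R y + v) ` C"
    using assms(1) unfolding homothet_def by auto
  have "(\<lambda>y. s *\<^sub>R y + u) ` H = (\<lambda>y. (s*l) *\<^sub>R y + (s *\<^sub>R v + u)) ` C"
    unfolding lv image_image by (simp add: algebra_simps)
  then show ?thesis unfolding homothet_def using lv assms(2)
    by (metis mult_pos_pos)
qed

lemma interior_aff:
  fixes S :: "'a::euclidean_space set"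
  assumes "x \<in> interior S" "s > 0"
  shows "s *\<^sub>R x + u \<in> interior ((\<lambda>y. s *\<^sub>R y + u) ` S)"
proof -
  have "open ((\<lambda>y. s *\<^sub>R y + u) ` interior S)"
    unfolding aff_eq using open_affinity[of "interior S" s u] assms by auto
  moreover have "(\<lambda>y. s *\<^sub>R y + u) ` interior S \<subseteq> (\<lambda>y. s *\<^sub>R y + u) ` S"
    using interior_subset by blast
  ultimately show ?thesis using assms(1) interior_maximal by blast
qed

lemma compact_aff:
  fixes S :: "'a::euclidean_space set"
  assumes "compact S"
  shows "compact ((\<lambda>y. s *\<^sub>R y + u) ` S)"
  unfolding aff_eq using compact_affinity[OF assms] by auto

lemma convex_aff:
  fixes S :: "'a::euclidean_space set"
  assumes "convex S"
  shows "convex ((\<lambda>y. s *\<^sub>R y + u) ` S)"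
  unfolding aff_eq using convex_affinity[OF assms] by auto

lemma convex_body_homothet:
  assumes "convex_body C" "homothet C H"
  shows "convex_body H"
proof -
  obtain l v where lv: "l > 0" "H = (\<lambda>y. l *\<^sub>R y + v) ` C"
    using assms(2) unfolding homothet_def by auto
  obtain x where "x \<in> interior C" using assms(1) unfolding convex_body_def by auto
  then have "l *\<^sub>R x + v \<in> interior H" using interior_aff lv by blast
  then show ?thesis using assms(1) lv compact_aff convex_aff unfolding convex_body_def by blast
qed

lemma shrink_mono:
  fixes K :: "'a::euclidean_space set"
  assumes "convex K" "p \<in> K" "0 \<le> s" "s \<le> t"
  shows "(\<lambda>y. s *\<^sub>R y + (1-s) *\<^sub>R p) ` K \<subseteq> (\<lambda>y. t *\<^sub>R y + (1-t) *\<^sub>R p) ` K"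
proof
  fix z assume "z \<in> (\<lambda>y. s *\<^sub>R y + (1-s) *\<^sub>R p) ` K"
  then obtain k where k: "k \<in> K" "z = s *\<^sub>R k + (1-s) *\<^sub>R p" by auto
  show "z \<in> (\<lambda>y. t *\<^sub>R y + (1-t) *\<^sub>R p) ` K"
  proof (cases "t = 0")
    case True
    then have "s = 0" using assms by auto
    then show ?thesis using True k assms(2) by auto
  next
    case False
    then have tp: "t > 0" using assms by auto
    define k' where "k' = (s/t) *\<^sub>R k + (1 - s/t) *\<^sub>R p"
    have "k' \<in> K" unfolding k'_def
      using convexD[OF assms(1) k(1) assms(2), of "s/t" "1 - s/t"] tp assms by auto
    moreover have "t *\<^sub>R k' + (1-t) *\<^sub>R p = z"
      unfolding k'_def k(2) using tp by (simp add: algebra_simps)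
    ultimately show ?thesis by force
  qed
qed

lemma shrink_limit:
  fixes K :: "'a::euclidean_space set"
  assumes "closed K" "sq \<longlonglongrightarrow> s" "s > 0" "\<And>n. sq n > 0"
    and "\<And>n. y \<in> (\<lambda>k. sq n *\<^sub>R k + (1 - sq n) *\<^sub>R p) ` K"
  shows "y \<in> (\<lambda>k. s *\<^sub>R k + (1 - s) *\<^sub>R p) ` K"
proof -
  have mem: "p + (1 / sq n) *\<^sub>R (y - p) \<in> K" for n
  proof -
    obtain k where k: "k \<in> K" "y = sq n *\<^sub>R k + (1 - sq n) *\<^sub>R p" using assms(5)[of n] by auto
    have "p + (1 / sq n) *\<^sub>R (y - p) = k" unfolding k(2) using assms(4)[of n]
      by (simp add: algebra_simps)
    then show ?thesis using k by simp
  qed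
  have "(\<lambda>n. p + (1 / sq n) *\<^sub>R (y - p)) \<longlonglongrightarrow> p + (1 / s) *\<^sub>R (y - p)"
    using assms(2,3) by (intro tendsto_intros) auto
  then have "p + (1 / s) *\<^sub>R (y - p) \<in> K" using closed_sequentially[OF assms(1), of "\<lambda>n. p + (1 / sq n) *\<^sub>R (y - p)"] mem by blast
  moreover have "s *\<^sub>R (p + (1 / s) *\<^sub>R (y - p)) + (1 - s) *\<^sub>R p = y"
    using assms(3) by (simp add: algebra_simps)
  ultimately show ?thesis by force
qed

lemma point_null:
  assumes "convex_body C" "non_degenerate C M" "sets M = sets borel"
  shows "emeasure M {x} = 0"
proof -
  have "C \<noteq> {}" "bounded C" using assms(1) unfolding convex_body_def
    by (auto simp: compact_imp_bounded)
  then have "C \<noteq> UNIV" using not_bounded_UNIV by auto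
  then obtain p where p: "p \<in> frontier C" using frontier_not_empty \<open>C \<noteq> {}\<close> by blast
  define H where "H = (\<lambda>y. 1 *\<^sub>R y + (x - p)) ` C"
  have "homothet C H" unfolding H_def homothet_def by (intro exI[of _ 1]) auto
  then have z: "emeasure M (frontier H) = 0" using assms(2) unfolding non_degenerate_def by auto
  have "H = (+) (x - p) ` C" unfolding H_def by (auto simp: add.commute)
  then have "x \<in> frontier H" using p frontier_translation[of "x - p" C] by force
  then have "emeasure M {x} \<le> emeasure M (frontier H)"
    using assms(3) by (intro emeasure_mono) auto
  then show ?thesis using z by simp
qed

lemma key:
  fixes K :: "'a::euclidean_space set" and M :: "'a measure"
  assumes K: "compact K" "convex K" "x \<in> K" "x \<in> cball c r" "\<not> K \<subseteq> cball c r"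
    and sets: "sets M = sets borel" and fin: "emeasure M K < \<infinity>"
    and front: "\<And>t. 0 < t \<Longrightarrow> emeasure M (frontier ((\<lambda>y. t *\<^sub>R y + (1-t) *\<^sub>R x) ` K)) = 0"
    and pt: "emeasure M {x} = 0" and dpos: "0 < \<delta>"
  shows "\<exists>t. 0 < t \<and> t \<le> 1 \<and> \<not> (\<lambda>y. t *\<^sub>R y + (1-t) *\<^sub>R x) ` K \<subseteq> cball c r
           \<and> emeasure M ((\<lambda>y. t *\<^sub>R y + (1-t) *\<^sub>R x) ` K - ball c r) < \<delta>"
proof -
  define hom where "hom t = (\<lambda>y. t *\<^sub>R y + (1-t) *\<^sub>R x) ` K" for t
  define S where "S = {t. 0 \<le> t \<and> t \<le> 1 \<and> \<not> hom t \<subseteq> cball c r}"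
  have h1: "hom 1 = K" by (simp add: hom_def)
  have S1: "1 \<in> S" using K h1 S_def by auto
  have monoh: "hom s \<subseteq> hom t" if "0 \<le> s" "s \<le> t" for s t
    unfolding hom_def using shrink_mono[OF K(2) K(3) that] .
  have homK: "hom t \<subseteq> K" if "0 \<le> t" "t \<le> 1" for t
    using monoh[OF that] h1 by simp
  have up: "t' \<in> S" if "t \<in> S" "t \<le> t'" "t' \<le> 1" for t t'
    using that monoh unfolding S_def by force
  define ts where "ts = Inf S"
  have bdd: "bdd_below S" unfolding S_def bdd_below_def by auto
  have ts0: "0 \<le> ts" unfolding ts_def using S1 by (intro cInf_greatest) (auto simp: S_def)
  have ts1: "ts \<le> 1" unfolding ts_def using S1 bdd by (intro cInf_lower) auto
  have notS: "hom u \<subseteq> cball c r" if "0 \<le> u" "u < ts" for u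
  proof -
    have "u \<notin> S"
    proof
      assume "u \<in> S"
      then have "Inf S \<le> u" by (rule cInf_lower[OF _ bdd])
      then show False using that ts_def by simp
    qed
    moreover have "u \<le> 1" using that ts1 by simp
    ultimately show ?thesis using that(1) unfolding S_def by blast
  qed
  define sq where "sq n = min 1 (ts + inverse (real (Suc n)))" for n
  have sqS: "sq n \<in> S" for n
  proof -
    have "Inf S < ts + inverse (real (Suc n))" using ts_def by simp
    then obtain t where t: "t \<in> S" "t < ts + inverse (real (Suc n))"
      using cInf_lessD[of S] S1 by blast
    then have "t \<le> 1" unfolding S_def by simp
    then have "t \<le> sq n" "sq n \<le> 1" using t(2) unfolding sq_def by auto
    then show ?thesis using up[OF t(1)] by blast
  qed
  have sqpos: "0 < sq n" for n
  proof -
    have "0 < inverse (real (Suc n))" by simp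
    then show ?thesis unfolding sq_def using ts0 by linarith
  qed
  have sqdec: "sq (Suc n) \<le> sq n" for n
  proof -
    have "inverse (real (Suc (Suc n))) \<le> inverse (real (Suc n))"
      by (intro le_imp_inverse_le) auto
    then have h: "ts + inverse (real (Suc (Suc n))) \<le> ts + inverse (real (Suc n))" by linarith
    show ?thesis unfolding sq_def by (rule min.mono[OF order_refl h])
  qed
  have sqlim: "sq \<longlonglongrightarrow> ts"
  proof -
    have "(\<lambda>n. min 1 (ts + inverse (real (Suc n)))) \<longlonglongrightarrow> min 1 (ts + 0)"
      by (intro tendsto_intros LIMSEQ_inverse_real_of_nat)
    then show ?thesis using ts1 unfolding sq_def by simp
  qed
  define A where "A n = hom (sq n) - ball c r" for n
  have decA: "decseq A"
    unfolding decseq_Suc_iff A_def using monoh[OF less_imp_le[OF sqpos] sqdec] by blast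
  have cpt: "compact (hom t)" for t unfolding hom_def by (rule compact_aff[OF K(1)])
  have measA: "A n \<in> sets M" for n
    unfolding A_def sets using cpt compact_imp_closed by (intro borel_closed closed_Diff) auto
  have Kmeas: "K \<in> sets M" unfolding sets using K(1) compact_imp_closed borel_closed by auto
  have finA: "emeasure M (A n) \<noteq> \<infinity>" for n
  proof -
    have "sq n \<le> 1" using sqS[of n] unfolding S_def by auto
    then have "A n \<subseteq> K" unfolding A_def using homK[of "sq n"] less_imp_le[OF sqpos] by blast
    then have "emeasure M (A n) \<le> emeasure M K" using Kmeas by (intro emeasure_mono) auto
    then show ?thesis using fin by auto
  qed
  have lim: "(\<lambda>n. emeasure M (A n)) \<longlonglongrightarrow> emeasure M (\<Inter>n. A n)"
    using measA decA finA by (intro Lim_emeasure_decseq) auto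
  have zero: "emeasure M (\<Inter>n. A n) = 0"
  proof (cases "ts = 0")
    case True
    obtain D where D: "\<And>k. k \<in> K \<Longrightarrow> norm (k - x) \<le> D"
    proof -
      have "bounded ((\<lambda>k. k - x) ` K)" using K(1) compact_imp_bounded bounded_translation_minus by blast
      then show ?thesis using that unfolding bounded_iff by blast
    qed
    have "(\<Inter>n. A n) \<subseteq> {x}"
    proof
      fix y assume y: "y \<in> (\<Inter>n. A n)"
      have bnd: "norm (y - x) \<le> D * inverse (real (Suc n))" for n
      proof -
        have "y \<in> hom (sq n)" using y A_def by auto
        then obtain k where k: "k \<in> K" "y = sq n *\<^sub>R k + (1 - sq n) *\<^sub>R x" unfolding hom_def by auto
        have "y - x = sq n *\<^sub>R (k - x)" using k(2) by (simp add: algebra_simps)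
        then have "norm (y - x) = sq n * norm (k - x)" using sqpos[of n] by simp
        also have "\<dots> \<le> inverse (real (Suc n)) * D"
          using D[OF k(1)] sqpos[of n] True unfolding sq_def
          by (intro mult_mono) auto
        finally show ?thesis by (simp add: mult.commute)
      qed
      have "norm (y - x) = 0"
      proof (rule ccontr)
        assume "norm (y - x) \<noteq> 0"
        then have np: "norm (y - x) > 0" by simp
        obtain n where n: "D / norm (y - x) < real n" using reals_Archimedean2 by blast
        have "D < real n * norm (y - x)" using n np by (simp add: field_simps)
        also have "\<dots> < real (Suc n) * norm (y - x)" using np by simp
        finally have "D * inverse (real (Suc n)) < norm (y - x)"
          by (simp add: field_simps)
        then show False using bnd[of n] by simp
      qed
      then show "y \<in> {x}" by simp
    qed
    then have "emeasure M (\<Inter>n. A n) \<le> emeasure M {x}" using sets by (intro emeasure_mono) auto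
    then show ?thesis using pt by simp
  next
    case False
    then have tsp: "ts > 0" using ts0 by simp
    have homc: "hom ts \<subseteq> cball c r"
    proof
      fix y' assume "y' \<in> hom ts"
      then obtain k where k: "k \<in> K" "y' = ts *\<^sub>R k + (1 - ts) *\<^sub>R x" unfolding hom_def by auto
      define u where "u m = ts * (1 - inverse (real (Suc (Suc m))))" for m
      have ulim: "u \<longlonglongrightarrow> ts * (1 - 0)" unfolding u_def
        by (intro tendsto_intros LIMSEQ_inverse_real_of_nat[THEN LIMSEQ_Suc])
      have "inverse (real (Suc (Suc m))) \<le> 1" "inverse (real (Suc (Suc m))) > 0" for m
        by (auto simp: field_simps)
      then have u: "0 \<le> u m" "u m < ts" for m unfolding u_def using tsp by auto
      have mem: "u m *\<^sub>R k + (1 - u m) *\<^sub>R x \<in> cball c r" for m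
        using notS[OF u(1) u(2), of m] k(1) unfolding hom_def by auto
      have "(\<lambda>m. u m *\<^sub>R k + (1 - u m) *\<^sub>R x) \<longlonglongrightarrow> ts *\<^sub>R k + (1 - ts) *\<^sub>R x"
        using ulim by (intro tendsto_intros) auto
      then show "y' \<in> cball c r" using k(2) closed_sequentially[OF closed_cball, of "\<lambda>m. u m *\<^sub>R k + (1 - u m) *\<^sub>R x"] mem
        by blast
    qed
    have "(\<Inter>n. A n) \<subseteq> frontier (hom ts)"
    proof
      fix y assume y: "y \<in> (\<Inter>n. A n)"
      have yh: "y \<in> hom ts" unfolding hom_def
        by (rule shrink_limit[OF compact_imp_closed[OF K(1)] sqlim tsp sqpos]) (use y in \<open>auto simp: A_def hom_def\<close>)
      have yb: "y \<notin> ball c r" using y A_def by auto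
      have "interior (hom ts) \<subseteq> ball c r" using interior_mono[OF homc] by simp
      then show "y \<in> frontier (hom ts)" using yh yb closure_subset unfolding frontier_def by blast
    qed
    then have "emeasure M (\<Inter>n. A n) \<le> emeasure M (frontier (hom ts))"
      using sets by (intro emeasure_mono) auto
    then show ?thesis using front[OF tsp] unfolding hom_def by simp
  qed
  have "eventually (\<lambda>n. emeasure M (A n) < \<delta>) sequentially"
    using order_tendstoD(2)[OF lim] zero dpos by simp
  then obtain N where "emeasure M (A N) < \<delta>" by (auto simp: eventually_sequentially)
  moreover have "sq N \<le> 1" "\<not> hom (sq N) \<subseteq> cball c r" using sqS[of N] unfolding S_def by auto
  ultimately show ?thesis using sqpos[of N] unfolding A_def hom_def by blast
qed

theorem mainTheorem16:
  fixes C C' B :: "'a::euclidean_space set" and M :: "'a measure"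
  assumes "convex_body C"
    and "locally_finite_borel M"
    and "non_degenerate C M"
    and "emeasure M C > 0"
    and "emeasure M UNIV = \<infinity>"
    and "\<exists>c r. r > 0 \<and> (B = ball c r \<or> B = cball c r)"
    and "emeasure M B \<ge> emeasure M C"
    and "homothet C C'"
    and "emeasure M (C' \<inter> B) < emeasure M C"
    and "\<not> C' \<subseteq> B"
  shows "\<exists>F. finite F \<and> C' \<inter> B \<subseteq> \<Union>F \<and>
           (\<forall>H\<in>F. homothet C H \<and> emeasure M H \<le> emeasure M C \<and> \<not> H \<subseteq> B)"
proof -
  have sets: "sets M = sets borel" and cfin: "\<And>K. compact K \<Longrightarrow> emeasure M K < \<infinity>"
    using assms(2) unfolding locally_finite_borel_def by auto
  have cmeas: "K \<in> sets M" if "compact K" for K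
    using that sets compact_imp_closed borel_closed by auto
  obtain c r where r: "r > 0" "B = ball c r \<or> B = cball c r" using assms(6) by auto
  have Bb: "ball c r \<subseteq> B" "B \<subseteq> cball c r" using r(2) ball_subset_cball[of c r] by blast+
  have ballm: "ball c r \<in> sets M" unfolding sets by (rule borel_open) simp
  have cballm: "cball c r \<in> sets M" unfolding sets by (rule borel_closed) simp
  have Bm: "B \<in> sets M" using r(2) ballm cballm by blast
  have cbC': "convex_body C'" by (rule convex_body_homothet[OF assms(1) assms(8)])
  then have C'c: "compact C'" "convex C'" and "interior C' \<noteq> {}" unfolding convex_body_def by auto
  then obtain p0 where p0: "p0 \<in> interior C'" by auto
  have oC: "p0 \<in> C'" using p0 interior_subset by auto
  define g where "g l = (\<lambda>y. l *\<^sub>R y + (1 - l) *\<^sub>R p0) ` C'" for l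
  define lam where "lam n = 1 + inverse (real (Suc n))" for n
  define D where "D n = g (lam n) \<inter> B" for n
  have lampos: "1 < lam n" for n unfolding lam_def by simp
  have lamdec: "lam (Suc n) \<le> lam n" for n
  proof -
    have "inverse (real (Suc (Suc n))) \<le> inverse (real (Suc n))"
      by (intro le_imp_inverse_le) auto
    then show ?thesis unfolding lam_def by linarith
  qed
  have gc: "compact (g l)" for l unfolding g_def by (rule compact_aff[OF C'c(1)])
  have decD: "decseq D" unfolding decseq_Suc_iff
  proof
    fix n
    have "0 \<le> lam (Suc n)" using lampos[of "Suc n"] by linarith
    then have "g (lam (Suc n)) \<subseteq> g (lam n)" unfolding g_def
      by (rule shrink_mono[OF C'c(2) oC _ lamdec])
    then show "D (Suc n) \<subseteq> D n" unfolding D_def by blast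
  qed
  have measD: "D n \<in> sets M" for n unfolding D_def using cmeas[OF gc] Bm by auto
  have finD: "emeasure M (D n) \<noteq> \<infinity>" for n
  proof -
    have "emeasure M (D n) \<le> emeasure M (g (lam n))" unfolding D_def
      using cmeas[OF gc] by (intro emeasure_mono) auto
    then show ?thesis using cfin[OF gc, of "lam n"] by auto
  qed
  have limD: "(\<lambda>n. emeasure M (D n)) \<longlonglongrightarrow> emeasure M (\<Inter>n. D n)"
    using measD decD finD by (intro Lim_emeasure_decseq) auto
  have lamlim: "lam \<longlonglongrightarrow> 1"
  proof -
    have "(\<lambda>n. 1 + inverse (real (Suc n))) \<longlonglongrightarrow> 1 + 0"
      by (intro tendsto_intros LIMSEQ_inverse_real_of_nat)
    then show ?thesis unfolding lam_def by simp
  qed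
  have intD: "(\<Inter>n. D n) \<subseteq> C' \<inter> B"
  proof
    fix y assume y: "y \<in> (\<Inter>n. D n)"
    have "y \<in> (\<lambda>k. 1 *\<^sub>R k + (1 - 1) *\<^sub>R p0) ` C'"
      by (rule shrink_limit[OF compact_imp_closed[OF C'c(1)] lamlim])
        (use y lampos in \<open>auto simp: D_def g_def intro: order_less_trans[OF zero_less_one]\<close>)
    then show "y \<in> C' \<inter> B" using y D_def by auto
  qed
  have "emeasure M (\<Inter>n. D n) \<le> emeasure M (C' \<inter> B)"
    using intD cmeas[OF C'c(1)] Bm by (intro emeasure_mono) auto
  then have "emeasure M (\<Inter>n. D n) < emeasure M C" using assms(9) by simp
  then have "eventually (\<lambda>n. emeasure M (D n) < emeasure M C) sequentially"
    using order_tendstoD(2)[OF limD] by simp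
  then obtain N where N: "emeasure M (D N) < emeasure M C" by (auto simp: eventually_sequentially)
  define lm where "lm = lam N"
  define K where "K = g lm"
  have lm1: "1 < lm" using lampos lm_def by simp
  have Khom: "homothet C K" unfolding K_def g_def
    using homothet_comp[OF assms(8)] lm1 by simp
  have Kc: "compact K" "convex K" unfolding K_def g_def
    using compact_aff[OF C'c(1)] convex_aff[OF C'c(2)] by auto
  have C'K: "C' \<subseteq> interior K"
  proof
    fix x assume x: "x \<in> C'"
    define x' where "x' = x - (1 - 1/lm) *\<^sub>R (x - p0)"
    have "x' \<in> interior C'" unfolding x'_def
      using lm1 by (intro mem_interior_convex_shrink[OF C'c(2) p0 x]) (auto simp: field_simps)
    then have "lm *\<^sub>R x' + (1-lm) *\<^sub>R p0 \<in> interior K"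
      unfolding K_def g_def using lm1 by (intro interior_aff) auto
    moreover have "lm *\<^sub>R x' + (1-lm) *\<^sub>R p0 = x"
    proof -
      have e: "lm * (1 - 1/lm) = lm - 1" using lm1 by (simp add: field_simps)
      have "lm *\<^sub>R ((1 - 1/lm) *\<^sub>R (x - p0)) = (lm - 1) *\<^sub>R (x - p0)"
        by (simp only: scaleR_scaleR e)
      then have "lm *\<^sub>R x' = lm *\<^sub>R x - (lm - 1) *\<^sub>R (x - p0)"
        unfolding x'_def scaleR_diff_right by simp
      then show ?thesis by (simp add: algebra_simps)
    qed
    ultimately show "x \<in> interior K" by simp
  qed
  have KnotB: "\<not> K \<subseteq> cball c r"
  proof
    assume Ksub: "K \<subseteq> cball c r"
    obtain z where z: "z \<in> C'" "z \<notin> B" using assms(10) by auto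
    then have "z \<in> interior K" using C'K by auto
    then obtain e where e: "e > 0" "ball z e \<subseteq> K" unfolding mem_interior by auto
    have "z \<notin> ball c r" using z(2) Bb(1) by blast
    then have dz: "r \<le> norm (z - c)" by (simp add: dist_norm norm_minus_commute)
    then have nz: "norm (z - c) > 0" using r(1) by linarith
    define w where "w = z + (e/2 / norm (z - c)) *\<^sub>R (z - c)"
    have "dist z w = e/2" unfolding w_def dist_norm using nz e(1) by simp
    then have "w \<in> K" using e by auto
    have "w - c = (1 + e/2 / norm (z - c)) *\<^sub>R (z - c)" unfolding w_def by (simp add: algebra_simps)
    then have "norm (w - c) = (1 + e/2 / norm (z - c)) * norm (z - c)"
      using nz e(1) by (simp add: abs_of_pos)
    also have "\<dots> = norm (z - c) + e/2" using nz by (simp add: field_simps)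
    finally have "norm (w - c) > r" using dz e(1) by simp
    then have "w \<notin> cball c r" by (simp add: dist_norm norm_minus_commute)
    then show False using \<open>w \<in> K\<close> Ksub by auto
  qed
  have KB: "emeasure M (K \<inter> B) < emeasure M C" using N unfolding D_def K_def lm_def .
  have KBfin: "emeasure M (K \<inter> B) \<noteq> \<infinity>" using KB by (auto simp: top_unique)
  define \<delta> where "\<delta> = emeasure M C - emeasure M (K \<inter> B)"
  have dpos: "0 < \<delta>" unfolding \<delta>_def using KB by (rule diff_gr0_ennreal)
  have dsum: "emeasure M (K \<inter> B) + \<delta> = emeasure M C"
    unfolding \<delta>_def using KB by (intro add_diff_inverse_ennreal) auto
  have pt: "emeasure M {x} = 0" for x using point_null[OF assms(1) assms(3) sets] .
  have cover: "\<exists>H. homothet C H \<and> x \<in> interior H \<and> \<not> H \<subseteq> B \<and> emeasure M H \<le> emeasure M C"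
    if x: "x \<in> C' \<inter> cball c r" for x
  proof -
    have xi: "x \<in> interior K" using C'K x by auto
    then have xK: "x \<in> K" using interior_subset by auto
    have front: "emeasure M (frontier ((\<lambda>y. t *\<^sub>R y + (1-t) *\<^sub>R x) ` K)) = 0" if "0 < t" for t
      using assms(3) homothet_comp[OF Khom that] unfolding non_degenerate_def by blast
    obtain t where t: "0 < t" "t \<le> 1" "\<not> (\<lambda>y. t *\<^sub>R y + (1-t) *\<^sub>R x) ` K \<subseteq> cball c r"
      "emeasure M ((\<lambda>y. t *\<^sub>R y + (1-t) *\<^sub>R x) ` K - ball c r) < \<delta>"
      using key[OF Kc(1) Kc(2) xK _ KnotB sets cfin[OF Kc(1)] front pt dpos] x by blast
    define H where "H = (\<lambda>y. t *\<^sub>R y + (1-t) *\<^sub>R x) ` K"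
    have Hh: "homothet C H" unfolding H_def using homothet_comp[OF Khom t(1)] .
    have "t *\<^sub>R x + (1-t) *\<^sub>R x \<in> interior H" unfolding H_def using interior_aff[OF xi t(1)] .
    moreover have "t *\<^sub>R x + (1-t) *\<^sub>R x = x" by (simp add: algebra_simps)
    ultimately have Hi: "x \<in> interior H" by simp
    have HB: "\<not> H \<subseteq> B" using t(3) Bb(2) H_def by blast
    have HK: "H \<subseteq> K"
      using shrink_mono[OF Kc(2) xK _ t(2)] t(1) unfolding H_def by simp
    have Hc: "compact H" unfolding H_def by (rule compact_aff[OF Kc(1)])
    have "emeasure M H \<le> emeasure M ((H \<inter> B) \<union> (H - ball c r))"
      using cmeas[OF Hc] Bm ballm Bb by (intro emeasure_mono) auto
    also have "\<dots> \<le> emeasure M (H \<inter> B) + emeasure M (H - ball c r)"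
      using cmeas[OF Hc] Bm ballm by (intro emeasure_subadditive) auto
    also have "\<dots> \<le> emeasure M (K \<inter> B) + emeasure M (H - ball c r)"
      using HK cmeas[OF Kc(1)] Bm by (intro add_right_mono emeasure_mono) auto
    also have "\<dots> < emeasure M (K \<inter> B) + \<delta>"
      using KBfin t(4) unfolding H_def by (simp add: ennreal_add_left_cancel_less)
    finally have "emeasure M H \<le> emeasure M C" using dsum by simp
    then show ?thesis using Hh Hi HB by blast
  qed
  then have "\<forall>x\<in>C' \<inter> cball c r. \<exists>H. homothet C H \<and> x \<in> interior H \<and> \<not> H \<subseteq> B \<and> emeasure M H \<le> emeasure M C"
    by blast
  note ex = this
  obtain Hf where Hf0: "\<forall>x\<in>C' \<inter> cball c r. homothet C (Hf x) \<and> x \<in> interior (Hf x)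
      \<and> \<not> Hf x \<subseteq> B \<and> emeasure M (Hf x) \<le> emeasure M C"
    using bchoice[OF ex] by blast
  then have Hf: "\<And>x. x \<in> C' \<inter> cball c r \<Longrightarrow> homothet C (Hf x) \<and> x \<in> interior (Hf x)
      \<and> \<not> Hf x \<subseteq> B \<and> emeasure M (Hf x) \<le> emeasure M C" by blast
  have cpt: "compact (C' \<inter> cball c r)" using C'c(1) by (simp add: compact_Int_closed)
  obtain T where T: "T \<subseteq> C' \<inter> cball c r" "finite T" "C' \<inter> cball c r \<subseteq> (\<Union>x\<in>T. interior (Hf x))"
    by (rule compactE_image[OF cpt, of "C' \<inter> cball c r" "\<lambda>x. interior (Hf x)"]) (use Hf in auto)
  have "C' \<inter> B \<subseteq> \<Union>(Hf ` T)" using T(3) Bb(2) interior_subset by blast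
  moreover have "\<forall>H\<in>Hf ` T. homothet C H \<and> emeasure M H \<le> emeasure M C \<and> \<not> H \<subseteq> B"
    using Hf T(1) by blast
  ultimately show ?thesis using T(2) by blast
qed

end
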